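(* Let $d>k\geq1$, let $A\in\mathbb{R}^{d\times d}$ be symmetric positive semidefinite with $\lambda_k>\lambda_{k+1}$, let $\beta>0$ with $\lambda_k>2\sqrt\beta\geq\lambda_{k+1}$, and let $X_0\in\mathrm{St}(d,k)$ with $\cos\theta_k(U_k,X_0)>0$. Consider ANPM with momentum $\beta$ and perturbations $(\Xi_t)$ such that, for all $t\geq0$, $\|U_k^\top\Xi_t\|_2\leq c(\lambda_k-2\sqrt\beta)\cos\theta_k(U_k,X_t)$ with $c=1/32$. Then for all $t\geq0$: $U_k^\top X_t$ is invertible (so $E_t$ is well defined), $G_t$ is well defined, $U_k^\top Y_{t+1}$ and $Y_{t+1}$ have rank $k$, $\|G_t\|_2\leq\frac{1}{1/2-c\Delta}$, $$G_t=\big(I_k-\beta\Lambda_k^{-1}(U_k^\top X_{t-1})(U_k^\top X_tR_t)^{-1}+E_t\big)^{-1},$$ where $X_{-1}:=\frac{1}{2\beta}AX_0$ and $R_0:=I_k$, and $U_k^\top Y_{t+1}=\Lambda_kG_t^{-1}(U_k^\top X_t)$.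
   Context: $A$ has eigenvalues $\lambda_1\geq\dots\geq\lambda_d\geq0$, orthonormal eigenvectors $u_i$; $U_k:=[u_1,\dots,u_k]$, $\Lambda_k:=\mathrm{diag}(\lambda_1,\dots,\lambda_k)$. $\Delta:=(\lambda_k-2\sqrt\beta)/\lambda_k$. $\mathrm{St}(d,k)$, $\mathrm{QR}$, $\theta_k(U,X):=\arccos\sigma_{\min}(U^\top X)$ as usual (QR: $Y=XR$, $X^\top X=I_k$, $R$ upper triangular with nonnegative diagonal). ANPM: $Y_1:=\tfrac12AX_0+\Xi_0$, $(X_1,R_1)=\mathrm{QR}(Y_1)$; for $t\geq1$, $Y_{t+1}=AX_t-\beta X_{t-1}R_t^{-1}+\Xi_t$, $(X_{t+1},R_{t+1})=\mathrm{QR}(Y_{t+1})$. $E_t:=\Lambda_k^{-1}(U_k^\top\Xi_t)(U_k^\top X_t)^{-1}$; $G_0:=(I_k/2+E_0)^{-1}$, $G_{t+1}:=(I_k-\beta\Lambda_k^{-1}G_t\Lambda_k^{-1}+E_{t+1})^{-1}$. *)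

theory Defs
  imports "HOL-Analysis.Analysis"
begin

text \<open>Matrices are HOL-Analysis matrices: a d x k matrix has type real^'k^'d,
  entry (i,j) is M $ i $ j. Column index type 'k is ordered via a bijection
  idx : 'k -> {0..<k}.\<close>

definition sigma_min :: "real^'k^'k \<Rightarrow> real" where
  "sigma_min M = Inf ((\<lambda>x. norm (M *v x)) ` {x. norm x = 1})"

definition theta_k :: "real^'k^'d \<Rightarrow> real^'k^'d \<Rightarrow> real" where
  "theta_k U X = arccos (sigma_min (transpose U ** X))"

definition opnorm2 :: "real^'n^'m \<Rightarrow> real" where
  "opnorm2 M = onorm (\<lambda>x. M *v x)"

definition stiefel :: "real^'k^'d \<Rightarrow> bool" where
  "stiefel X \<longleftrightarrow> transpose X ** X = mat 1"

definition upper_tri_nonneg :: "('k \<Rightarrow> nat) \<Rightarrow> real^'k^'k \<Rightarrow> bool" where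
  "upper_tri_nonneg idx R \<longleftrightarrow>
     (\<forall>i j. idx j < idx i \<longrightarrow> R $ i $ j = 0) \<and> (\<forall>i. 0 \<le> R $ i $ i)"

definition is_QR :: "('k \<Rightarrow> nat) \<Rightarrow> real^'k^'d \<Rightarrow> real^'k^'d \<Rightarrow> real^'k^'k \<Rightarrow> bool" where
  "is_QR idx Y X R \<longleftrightarrow> Y = X ** R \<and> stiefel X \<and> upper_tri_nonneg idx R"

text \<open>U_k = [u_1,...,u_k] (eigenvectors indexed from 0) and Lambda_k.\<close>
definition Uk :: "(nat \<Rightarrow> real^'d) \<Rightarrow> ('k \<Rightarrow> nat) \<Rightarrow> real^'k^'d" where
  "Uk u idx = (\<chi> r c. u (idx c) $ r)"

definition Lamk :: "(nat \<Rightarrow> real) \<Rightarrow> ('k \<Rightarrow> nat) \<Rightarrow> real^'k^'k" where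
  "Lamk lam idx = (\<chi> i j. if i = j then lam (idx i) else 0)"

definition anpm_E :: "real^'k^'k \<Rightarrow> real^'k^'d \<Rightarrow> (nat \<Rightarrow> real^'k^'d) \<Rightarrow> (nat \<Rightarrow> real^'k^'d)
    \<Rightarrow> nat \<Rightarrow> real^'k^'k" where
  "anpm_E Lam U Xi X t = matrix_inv Lam ** (transpose U ** Xi t) ** matrix_inv (transpose U ** X t)"

primrec Gpre :: "real \<Rightarrow> real^'k^'k \<Rightarrow> (nat \<Rightarrow> real^'k^'k) \<Rightarrow> nat \<Rightarrow> real^'k^'k" where
  "Gpre beta Lam E 0 = (1/2) *\<^sub>R mat 1 + E 0"
| "Gpre beta Lam E (Suc t) =
     mat 1 - beta *\<^sub>R (matrix_inv Lam ** matrix_inv (Gpre beta Lam E t) ** matrix_inv Lam) + E (Suc t)"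

definition Gmat :: "real \<Rightarrow> real^'k^'k \<Rightarrow> (nat \<Rightarrow> real^'k^'k) \<Rightarrow> nat \<Rightarrow> real^'k^'k" where
  "Gmat beta Lam E t = matrix_inv (Gpre beta Lam E t)"

end

theory Submission
  imports Defs
begin



lemma mi_props:
  fixes A :: "real^'n^'n"
  assumes "invertible A"
  shows "A ** matrix_inv A = mat 1" "matrix_inv A ** A = mat 1"
proof -
  have "\<exists>A'. A ** A' = mat 1 \<and> A' ** A = mat 1" using assms unfolding invertible_def by blast
  then have "A ** matrix_inv A = mat 1 \<and> matrix_inv A ** A = mat 1"
    unfolding matrix_inv_def by (rule someI_ex)
  then show "A ** matrix_inv A = mat 1" "matrix_inv A ** A = mat 1" by auto
qed

lemma mi_unique:
  fixes A B :: "real^'n^'n"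
  assumes "B ** A = mat 1"
  shows "matrix_inv A = B" "invertible A"
proof -
  show inv: "invertible A" using assms invertible_left_inverse by blast
  have "B = B ** (A ** matrix_inv A)" using mi_props[OF inv] by simp
  also have "\<dots> = matrix_inv A" by (simp add: matrix_mul_assoc assms)
  finally show "matrix_inv A = B" by simp
qed

lemma mi_mult:
  fixes A B :: "real^'n^'n"
  assumes "invertible A" "invertible B"
  shows "matrix_inv (A ** B) = matrix_inv B ** matrix_inv A"
proof (rule mi_unique(1))
  have "matrix_inv B ** matrix_inv A ** (A ** B) = matrix_inv B ** (matrix_inv A ** A) ** B"
    by (simp add: matrix_mul_assoc)
  then show "matrix_inv B ** matrix_inv A ** (A ** B) = mat 1"
    using mi_props[OF assms(1)] mi_props[OF assms(2)] by simp
qed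

lemma mi_inv:
  fixes A :: "real^'n^'n"
  assumes "invertible A"
  shows "matrix_inv (matrix_inv A) = A" "invertible (matrix_inv A)"
  using mi_unique[of A "matrix_inv A"] mi_props[OF assms] by auto

lemma inv_factors:
  fixes A B :: "real^'n^'n"
  assumes "invertible (A ** B)"
  shows "invertible A" "invertible B"
  using assms by (auto simp: invertible_det_nz det_mul)

lemma mi_mv:
  fixes A :: "real^'n^'n"
  assumes "invertible A"
  shows "A *v (matrix_inv A *v x) = x" "matrix_inv A *v (A *v x) = x"
  using mi_props[OF assms] by (simp_all add: matrix_vector_mul_assoc)

lemma opn_mv: "norm (M *v x) \<le> opnorm2 (M::real^'n^'m) * norm x"
  unfolding opnorm2_def by (rule onorm) simp

lemma opn_nonneg: "0 \<le> opnorm2 (M::real^'n^'m)"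
  unfolding opnorm2_def by (rule onorm_pos_le) simp

lemma opn_bound:
  assumes "0 \<le> b" "\<And>x. norm (M *v x) \<le> b * norm x"
  shows "opnorm2 (M::real^'n^'m) \<le> b"
  unfolding opnorm2_def by (rule onorm_bound) (use assms in auto)

lemma opn_mult: "opnorm2 ((A::real^'n^'m) ** (B::real^'p^'n)) \<le> opnorm2 A * opnorm2 B"
proof (rule opn_bound)
  show "0 \<le> opnorm2 A * opnorm2 B" by (intro mult_nonneg_nonneg opn_nonneg)
  fix x
  have "norm ((A ** B) *v x) = norm (A *v (B *v x))" by (simp add: matrix_vector_mul_assoc)
  also have "\<dots> \<le> opnorm2 A * norm (B *v x)" by (rule opn_mv)
  also have "\<dots> \<le> opnorm2 A * (opnorm2 B * norm x)"
    by (rule mult_left_mono[OF opn_mv opn_nonneg])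
  finally show "norm ((A ** B) *v x) \<le> opnorm2 A * opnorm2 B * norm x" by (simp add: mult.assoc)
qed

lemma lower_inv:
  fixes M :: "real^'n^'n"
  assumes a: "0 < a" and lb: "\<And>x. a * norm x \<le> norm (M *v x)"
  shows "invertible M" "opnorm2 (matrix_inv M) \<le> 1 / a"
proof -
  have "inj ((*v) M)"
  proof (rule linear_injective_0[THEN iffD2])
    show "linear ((*v) M)" by simp
    show "\<forall>x. M *v x = 0 \<longrightarrow> x = 0"
    proof (intro allI impI)
      fix x assume "M *v x = 0"
      then have "a * norm x \<le> 0" using lb[of x] by simp
      then show "x = 0" using a by (simp add: mult_le_0_iff)
    qed
  qed
  then show inv: "invertible M"
    using matrix_left_invertible_injective invertible_left_inverse by blast
  show "opnorm2 (matrix_inv M) \<le> 1 / a"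
  proof (rule opn_bound)
    show "0 \<le> 1 / a" using a by simp
    fix y
    have "a * norm (matrix_inv M *v y) \<le> norm y"
      using lb[of "matrix_inv M *v y"] mi_mv[OF inv] by simp
    then show "norm (matrix_inv M *v y) \<le> 1 / a * norm y"
      using a by (simp add: field_simps mult.commute)
  qed
qed

lemma sigma_lb:
  fixes M :: "real^'n^'n"
  shows "sigma_min M * norm x \<le> norm (M *v x)" "0 \<le> sigma_min M"
proof -
  have ne: "(\<lambda>x. norm (M *v x)) ` {x. norm x = 1} \<noteq> {}"
    using norm_axis_1 by (metis (mono_tags) empty_iff image_eqI mem_Collect_eq)
  have bdd: "bdd_below ((\<lambda>x. norm (M *v x)) ` {x. norm x = 1})"
    by (rule bdd_belowI[of _ 0]) auto
  show "0 \<le> sigma_min M" unfolding sigma_min_def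
    by (rule cInf_greatest[OF ne]) auto
  show "sigma_min M * norm x \<le> norm (M *v x)"
  proof (cases "x = 0")
    case True then show ?thesis by simp
  next
    case False
    then have nx: "norm x > 0" by simp
    have "sigma_min M \<le> norm (M *v ((1 / norm x) *\<^sub>R x))"
      unfolding sigma_min_def by (rule cInf_lower[OF _ bdd]) (use nx in auto)
    also have "\<dots> = norm (M *v x) / norm x"
      by (simp add: matrix_vector_mult_scaleR)
    finally show ?thesis using nx by (simp add: field_simps)
  qed
qed

lemma sigma_inv:
  fixes M :: "real^'n^'n"
  assumes inv: "invertible M"
  shows "sigma_min M * opnorm2 (matrix_inv M) \<le> 1"
proof (cases "sigma_min M = 0")
  case True then show ?thesis by simp
next
  case False
  then have pos: "sigma_min M > 0" using sigma_lb(2)[of M] by simp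
  have "opnorm2 (matrix_inv M) \<le> 1 / sigma_min M"
    by (rule lower_inv(2)[OF pos sigma_lb(1)])
  then show ?thesis using pos by (simp add: field_simps mult.commute)
qed

lemma sigma_pos_inv:
  fixes M :: "real^'n^'n"
  assumes "sigma_min M > 0" shows "invertible M"
  by (rule lower_inv(1)[OF assms sigma_lb(1)])

lemma inner_transpose: "inner (transpose U *v w) z = inner w ((U::real^'k^'d) *v z)"
  by (simp add: dot_lmul_matrix)

lemma orth_norm:
  fixes U :: "real^'k^'d"
  assumes "transpose U ** U = mat 1"
  shows "norm (U *v z) = norm z"
proof -
  have "inner (U *v z) (U *v z) = inner z ((U *v z) v* U)" by (metis dot_lmul_matrix inner_commute)
  also have "(U *v z) v* U = z" using matrix_vector_mul_assoc[of "transpose U" U z] assms by simp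
  finally show ?thesis by (simp add: norm_eq_sqrt_inner)
qed

lemma orth_contr:
  fixes U :: "real^'k^'d"
  assumes "transpose U ** U = mat 1"
  shows "norm (transpose U *v v) \<le> norm v"
proof -
  define z where "z = transpose U *v v"
  have "norm z ^ 2 = inner z z" by (simp add: power2_norm_eq_inner)
  also have "\<dots> = inner v (U *v z)" unfolding z_def transpose_matrix_vector by (rule dot_lmul_matrix)
  also have "\<dots> \<le> norm v * norm (U *v z)" by (rule norm_cauchy_schwarz)
  also have "\<dots> = norm v * norm z" using orth_norm[OF assms] by simp
  finally have "norm z * norm z \<le> norm v * norm z" by (simp add: power2_eq_square)
  then have "norm z \<le> norm v"
    by (cases "norm z = 0") (auto simp: mult_le_cancel_right)
  then show ?thesis unfolding z_def .
qed

lemma sigma_le1: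
  fixes U X :: "real^'k^'d"
  assumes "transpose U ** U = mat 1" "stiefel X"
  shows "sigma_min (transpose U ** X) \<le> 1"
proof -
  obtain i :: 'k where True by blast
  have "sigma_min (transpose U ** X) * norm (axis i (1::real)) \<le> norm ((transpose U ** X) *v axis i 1)"
    by (rule sigma_lb(1))
  also have "\<dots> = norm (transpose U *v (X *v axis i 1))" by (simp add: matrix_vector_mul_assoc)
  also have "\<dots> \<le> norm (X *v axis i 1)" by (rule orth_contr[OF assms(1)])
  also have "\<dots> = 1" using orth_norm[of X "axis i 1"] assms(2) unfolding stiefel_def by simp
  finally show ?thesis by simp
qed



lemma Uk_orth:
  fixes u :: "nat \<Rightarrow> real^'d::finite" and idx :: "'k::finite \<Rightarrow> nat"
  assumes inj: "inj idx" and rng: "\<And>c. idx c < CARD('d)"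
    and orth: "\<forall>i<CARD('d). \<forall>j<CARD('d). u i \<bullet> u j = (if i = j then 1 else 0)"
  shows "transpose (Uk u idx) ** Uk u idx = mat 1"
proof -
  have "(transpose (Uk u idx) ** Uk u idx) $ i $ j = mat 1 $ i $ j" for i j
  proof -
    have "(transpose (Uk u idx) ** Uk u idx) $ i $ j = u (idx i) \<bullet> u (idx j)"
      by (simp add: matrix_matrix_mult_def transpose_def Uk_def inner_vec_def)
    also have "\<dots> = (if i = j then 1 else 0)" using orth rng inj by (auto simp: inj_eq)
    finally show ?thesis by (simp add: mat_def)
  qed
  then show ?thesis by (simp add: vec_eq_iff)
qed

lemma Uk_eig:
  fixes A :: "real^'d::finite^'d" and u :: "nat \<Rightarrow> real^'d::finite" and idx :: "'k::finite \<Rightarrow> nat"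
  assumes symm: "transpose A = A" and eig: "\<And>c. A *v u (idx c) = lam (idx c) *\<^sub>R u (idx c)"
  shows "transpose (Uk u idx) ** A = Lamk lam idx ** transpose (Uk u idx)"
proof -
  have "(transpose (Uk u idx) ** A) $ i $ r = (Lamk lam idx ** transpose (Uk u idx)) $ i $ r" for i r
  proof -
    have "(transpose (Uk u idx) ** A) $ i $ r = (\<Sum>s\<in>UNIV. A $ r $ s * u (idx i) $ s)"
    proof -
      have "A $ s $ r = A $ r $ s" for s using symm by (metis transpose_def vec_lambda_beta)
      then show ?thesis by (simp add: matrix_matrix_mult_def transpose_def Uk_def mult.commute)
    qed
    also have "\<dots> = (A *v u (idx i)) $ r" by (simp add: matrix_vector_mult_def)
    also have "\<dots> = lam (idx i) * u (idx i) $ r" using eig by simp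
    also have "\<dots> = (Lamk lam idx ** transpose (Uk u idx)) $ i $ r"
    proof -
      have "(Lamk lam idx ** transpose (Uk u idx)) $ i $ r
          = (\<Sum>j\<in>UNIV. (if j = i then lam (idx i) * u (idx i) $ r else 0))"
        unfolding matrix_matrix_mult_def transpose_def Uk_def Lamk_def
        by (simp add: if_distrib if_distribR eq_commute cong: if_cong)
      then show ?thesis by simp
    qed
    finally show ?thesis .
  qed
  then show ?thesis by (simp add: vec_eq_iff)
qed



lemma Lamk_mv: "(Lamk f idx *v x) $ i = f (idx i) * x $ i"
proof -
  have "(Lamk f idx *v x) $ i = (\<Sum>j\<in>UNIV. if j = i then f (idx i) * x $ i else 0)"
    unfolding Lamk_def matrix_vector_mult_def unfolding vec_lambda_beta by (intro sum.cong) auto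
  then show ?thesis by simp
qed

lemma Lamk_mm: "Lamk f idx ** Lamk g idx = Lamk (\<lambda>n. f n * g n) idx"
proof -
  have "(Lamk f idx ** Lamk g idx) $ i $ j = Lamk (\<lambda>n. f n * g n) idx $ i $ j" for i j
  proof -
    have "(Lamk f idx ** Lamk g idx) $ i $ j = (\<Sum>l\<in>UNIV. if l = i then (if i = j then f (idx i) * g (idx i) else 0) else 0)"
      unfolding Lamk_def matrix_matrix_mult_def unfolding vec_lambda_beta by (intro sum.cong) auto
    then show ?thesis by (simp add: Lamk_def)
  qed
  then show ?thesis by (simp add: vec_eq_iff)
qed

lemma Lamk_one: "(\<And>i. f (idx i) = 1) \<Longrightarrow> Lamk f idx = mat 1"
  by (simp add: Lamk_def mat_def vec_eq_iff)

lemma Lamk_inv: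
  assumes "\<And>i. f (idx i) \<noteq> 0"
  shows "matrix_inv (Lamk f idx) = Lamk (\<lambda>n. 1 / f n) idx" "invertible (Lamk f idx)"
proof -
  have "Lamk (\<lambda>n. 1 / f n) idx ** Lamk f idx = mat 1"
    unfolding Lamk_mm by (rule Lamk_one) (use assms in simp)
  then show "matrix_inv (Lamk f idx) = Lamk (\<lambda>n. 1 / f n) idx" "invertible (Lamk f idx)"
    using mi_unique by auto
qed

lemma Lamk_norm:
  assumes "0 \<le> b" "\<And>i. \<bar>f (idx i)\<bar> \<le> b"
  shows "opnorm2 (Lamk f idx) \<le> b"
proof (rule opn_bound[OF assms(1)])
  fix x :: "real^'a"
  have "norm (Lamk f idx *v x) \<le> norm (b *\<^sub>R x)"
  proof (rule norm_le_componentwise_cart)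
    fix i
    have "\<bar>f (idx i)\<bar> * \<bar>x $ i\<bar> \<le> b * \<bar>x $ i\<bar>"
      using mult_right_mono[OF assms(2)[of i] abs_ge_zero[of "x $ i"]] .
    then show "norm ((Lamk f idx *v x) $ i) \<le> norm ((b *\<^sub>R x) $ i)"
      using assms(1) by (simp add: Lamk_mv abs_mult)
  qed
  then show "norm (Lamk f idx *v x) \<le> b * norm x" using assms(1) by simp
qed



lemma mm_add_r: "((A::real^'n^'m) + B) ** C = A ** C + B ** C"
  by (simp add: matrix_matrix_mult_def vec_eq_iff sum.distrib algebra_simps)
lemma mm_sub_l: "(A::real^'n^'m) ** (B - C) = A ** B - A ** C"
  by (simp add: matrix_matrix_mult_def vec_eq_iff sum_subtractf algebra_simps)
lemma mm_sub_r: "((A::real^'n^'m) - B) ** C = A ** C - B ** C"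
  by (simp add: matrix_matrix_mult_def vec_eq_iff sum_subtractf algebra_simps)
lemma mm_scale_l: "(A::real^'n^'m) ** (r *\<^sub>R B) = r *\<^sub>R (A ** B)"
  by (simp add: matrix_matrix_mult_def vec_eq_iff scaleR_sum_right sum_distrib_left algebra_simps)
lemma mm_scale_r: "(r *\<^sub>R (A::real^'n^'m)) ** B = r *\<^sub>R (A ** B)"
  by (simp add: matrix_matrix_mult_def vec_eq_iff scaleR_sum_right sum_distrib_left algebra_simps)
lemma mv_scale_r: "(r *\<^sub>R (A::real^'n^'m)) *v x = r *\<^sub>R (A *v x)"
  by (simp add: matrix_vector_mult_def vec_eq_iff scaleR_sum_right sum_distrib_left algebra_simps)

lemma mi_rules:
  fixes P :: "real^'n^'n"
  assumes "invertible P"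
  shows "P ** matrix_inv P = mat 1" "matrix_inv P ** P = mat 1"
    "Z ** P ** matrix_inv P = Z" "Z ** matrix_inv P ** P = Z"
  using mi_props[OF assms] by (simp_all flip: matrix_mul_assoc)

lemma norm_lb3: "norm (x::'a::real_normed_vector) - norm a - norm b \<le> norm (x - a + b)"
proof -
  have "norm x = norm ((x - a + b) + (a - b))" by simp
  also have "\<dots> \<le> norm (x - a + b) + norm (a - b)" by (rule norm_triangle_ineq)
  also have "\<dots> \<le> norm (x - a + b) + (norm a + norm b)" using norm_triangle_ineq4[of a b] by simp
  finally show ?thesis by simp
qed

lemma half_id: "mat 1 - (1/2::real) *\<^sub>R (mat 1 :: real^'n^'n) = (1/2) *\<^sub>R mat 1"
  by (simp add: vec_eq_iff mat_def)

lemma rank_inv: "invertible (P::real^'n^'n) \<Longrightarrow> rank P = CARD('n)"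
  using full_rank_injective inj_matrix_vector_mult by blast



theorem proposition6:
  fixes A :: "real^'d::finite^'d"
    and u :: "nat \<Rightarrow> real^'d" and lam :: "nat \<Rightarrow> real"
    and idx :: "'k::finite \<Rightarrow> nat"
    and beta c :: real
    and X Y Xi :: "nat \<Rightarrow> real^'k^'d" and R :: "nat \<Rightarrow> real^'k^'k"
  assumes dk: "CARD('k) < CARD('d)"
    and idx: "bij_betw idx UNIV {..<CARD('k)}"
    and symm: "transpose A = A"
    and psd: "\<forall>x. 0 \<le> x \<bullet> (A *v x)"
    and eig_orth: "\<forall>i<CARD('d). \<forall>j<CARD('d). u i \<bullet> u j = (if i = j then 1 else 0)"
    and eig: "\<forall>i<CARD('d). A *v u i = lam i *\<^sub>R u i"
    and eig_sorted: "\<forall>i j. i \<le> j \<longrightarrow> j < CARD('d) \<longrightarrow> lam j \<le> lam i"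
    and eig_nonneg: "\<forall>i<CARD('d). 0 \<le> lam i"
    and gap: "lam (CARD('k) - 1) > lam (CARD('k))"
    and beta_pos: "beta > 0"
    and beta_up: "lam (CARD('k) - 1) > 2 * sqrt beta"
    and beta_lo: "2 * sqrt beta \<ge> lam (CARD('k))"
    and X0: "stiefel (X 0)"
    and X0_angle: "cos (theta_k (Uk u idx) (X 0)) > 0"
    and Y1: "Y 1 = (1/2) *\<^sub>R (A ** X 0) + Xi 0"
    and Ystep: "\<forall>t\<ge>1. Y (t + 1) = A ** X t - beta *\<^sub>R (X (t - 1) ** matrix_inv (R t)) + Xi t"
    and QR: "\<forall>t\<ge>1. is_QR idx (Y t) (X t) (R t)"
    and c_def: "c = 1/32"
    and pert: "\<forall>t. opnorm2 (transpose (Uk u idx) ** Xi t)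
                 \<le> c * (lam (CARD('k) - 1) - 2 * sqrt beta) * cos (theta_k (Uk u idx) (X t))"
  shows "\<forall>t.
    (let U = Uk u idx; Lam = Lamk lam idx; E = anpm_E Lam U Xi X;
         G = Gmat beta Lam E;
         lamk = lam (CARD('k) - 1);
         Delta = (lamk - 2 * sqrt beta) / lamk;
         Xprev = (if t = 0 then (1 / (2 * beta)) *\<^sub>R (A ** X 0) else X (t - 1));
         Rt = (if t = 0 then mat 1 else R t)
     in invertible (transpose U ** X t)
      \<and> invertible (Gpre beta Lam E t)
      \<and> rank (transpose U ** Y (t + 1)) = CARD('k)
      \<and> rank (Y (t + 1)) = CARD('k)
      \<and> opnorm2 (G t) \<le> 1 / (1/2 - c * Delta)
      \<and> G t = matrix_inv (mat 1 - beta *\<^sub>R (matrix_inv Lam ** (transpose U ** Xprev)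
                 ** matrix_inv (transpose U ** X t ** Rt)) + E t)
      \<and> transpose U ** Y (t + 1) = Lam ** matrix_inv (G t) ** (transpose U ** X t))"
  proof -
  define k where "k = CARD('k)"
  define U where "U = Uk u idx"
  define Lam where "Lam = Lamk lam idx"
  define E where "E = anpm_E Lam U Xi X"
  define Gp where "Gp = Gpre beta Lam E"
  define lamk where "lamk = lam (CARD('k) - 1)"
  define Delta where "Delta = (lamk - 2 * sqrt beta) / lamk"
  define s where "s = sqrt beta"
  define M where "M t = transpose U ** X t" for t
  define W where "W t = transpose U ** Xi t" for t
  define Linv where "Linv = matrix_inv Lam"
  define cD where "cD = c * Delta"
  define B where "B = 1 / (1/2 - cD)"
  define Xp where "Xp t = (if t = 0 then (1 / (2 * beta)) *\<^sub>R (A ** X 0) else X (t - 1))" for t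
  define Rt where "Rt t = (if t = 0 then mat 1 else R t)" for t
  have idx_lt: "idx c < CARD('k)" for c using idx by (auto dest: bij_betwE)
  have idx_inj: "inj idx" using idx bij_betw_imp_inj_on by blast
  have idx_d: "idx c < CARD('d)" for c using idx_lt[of c] dk by linarith
  have kpos: "0 < CARD('k)" by simp
  have lam_ge: "lamk \<le> lam (idx c)" for c
    unfolding lamk_def using eig_sorted idx_lt[of c] dk by auto
  have s_pos: "s > 0" unfolding s_def using beta_pos by simp
  have ss: "s * s = beta" unfolding s_def using beta_pos by simp
  have lamk_gt: "lamk > 2 * s" using beta_up unfolding lamk_def s_def .
  have lamk_pos: "lamk > 0" using lamk_gt s_pos by linarith
  have lam_pos: "lam (idx c) > 0" for c using lam_ge[of c] lamk_pos by linarith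
  have UU: "transpose U ** U = mat 1"
    unfolding U_def by (rule Uk_orth[OF idx_inj idx_d]) (use eig_orth in blast)
  have UA: "transpose U ** A = Lam ** transpose U"
    unfolding U_def Lam_def by (rule Uk_eig[OF symm]) (use eig idx_d in blast)
  have Linv_eq: "Linv = Lamk (\<lambda>n. 1 / lam n) idx" and invLam: "invertible Lam"
    unfolding Linv_def Lam_def using Lamk_inv[of lam idx] lam_pos by (auto simp: less_imp_neq[symmetric])
  have Linv_norm: "opnorm2 Linv \<le> 1 / lamk"
    unfolding Linv_eq
  proof (rule Lamk_norm)
    show "0 \<le> 1 / lamk" using lamk_pos by simp
    fix i show "\<bar>1 / lam (idx i)\<bar> \<le> 1 / lamk"
      using lam_pos[of i] lam_ge[of i] lamk_pos by (simp add: frac_le)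
  qed
  have Delta_pos: "0 < Delta" and Delta_lt: "Delta < 1"
    unfolding Delta_def s_def[symmetric] using lamk_gt lamk_pos s_pos by (auto simp: field_simps)
  have cD_pos: "0 < cD" and cD_lt: "cD < 1/2"
    unfolding cD_def c_def using Delta_pos Delta_lt by auto
  have B_pos: "B > 0" unfolding B_def using cD_lt by simp
  have key: "beta * (1 / lamk) * B * (1 / lamk) \<le> 1/2"
  proof -
    have h1: "1/2 - cD = (15 * lamk + 2 * s) / (32 * lamk)"
      unfolding cD_def c_def Delta_def s_def[symmetric] using lamk_pos by (simp add: field_simps)
    have h2: "B = 32 * lamk / (15 * lamk + 2 * s)" unfolding B_def h1 by simp
    have p: "15 * lamk + 2 * s > 0" using lamk_pos s_pos by simp
    have "(2 * s) * (2 * s) \<le> lamk * lamk"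
      by (rule mult_mono) (use lamk_gt s_pos in auto)
    then have n1: "4 * (s * s) \<le> lamk * lamk" by simp
    have "s * (2 * s) \<le> s * lamk"
      by (rule mult_left_mono) (use lamk_gt s_pos in auto)
    then have n2: "2 * (s * s) \<le> s * lamk" by simp
    have "64 * (s * s) \<le> lamk * (15 * lamk + 2 * s)" using n1 n2 by (simp add: algebra_simps)
    then have q: "32 * (s * s) \<le> 1/2 * (lamk * (15 * lamk + 2 * s))" by simp
    have pd: "0 < lamk * (15 * lamk + 2 * s)" using lamk_pos p by simp
    have eq: "beta * (1 / lamk) * B * (1 / lamk) = (32 * (s * s)) / (lamk * (15 * lamk + 2 * s))"
      unfolding h2 ss[symmetric] using lamk_pos p by (simp add: field_simps)
    show ?thesis unfolding eq using q pd by (simp add: divide_le_eq)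
  qed
  have stX: "stiefel (X t)" for t
    using X0 QR by (cases t) (auto simp: is_QR_def)
  have sig_nn: "0 \<le> sigma_min (M t)" for t by (rule sigma_lb(2))
  have sig_le: "sigma_min (M t) \<le> 1" for t unfolding M_def by (rule sigma_le1[OF UU stX])
  have cosX: "cos (theta_k U (X t)) = sigma_min (M t)" for t
    unfolding theta_k_def M_def[symmetric] using sig_nn[of t] sig_le[of t] by (simp add: cos_arccos)
  have Edef: "E t = Linv ** W t ** matrix_inv (M t)" for t
    unfolding E_def anpm_E_def Linv_def W_def M_def ..
  have Ebound: "opnorm2 (E t) \<le> cD" if invM: "invertible (M t)" for t
  proof -
    have w: "opnorm2 (W t) \<le> c * (lamk - 2 * s) * sigma_min (M t)"
      using pert unfolding W_def U_def[symmetric] lamk_def[symmetric] s_def[symmetric] cosX by blast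
    have sm: "sigma_min (M t) * opnorm2 (matrix_inv (M t)) \<le> 1" by (rule sigma_inv[OF invM])
    have c0: "0 \<le> c * (lamk - 2 * s)" using c_def lamk_gt by simp
    have "opnorm2 (E t) \<le> opnorm2 Linv * opnorm2 (W t) * opnorm2 (matrix_inv (M t))"
      unfolding Edef by (meson opn_mult order_trans mult_right_mono opn_nonneg)
    also have "\<dots> \<le> (1 / lamk) * (c * (lamk - 2 * s) * sigma_min (M t)) * opnorm2 (matrix_inv (M t))"
      by (intro mult_right_mono mult_mono Linv_norm w opn_nonneg) (use lamk_pos in simp)
    also have "\<dots> = (1 / lamk) * (c * (lamk - 2 * s)) * (sigma_min (M t) * opnorm2 (matrix_inv (M t)))"
      by (simp add: algebra_simps)
    also have "\<dots> \<le> (1 / lamk) * (c * (lamk - 2 * s)) * 1"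
      by (intro mult_left_mono sm) (use c0 lamk_pos in simp)
    also have "\<dots> = cD" unfolding cD_def Delta_def s_def by simp
    finally show ?thesis .
  qed
  have UY1: "transpose U ** Y 1 = (1/2) *\<^sub>R (Lam ** M 0) + W 0"
    unfolding Y1 M_def W_def
    by (simp add: matrix_add_ldistrib mm_scale_l matrix_mul_assoc UA)
  have UYs: "transpose U ** Y (Suc (Suc t)) = Lam ** M (Suc t) - beta *\<^sub>R (M t ** matrix_inv (R (Suc t))) + W (Suc t)" for t
    using Ystep[rule_format, of "Suc t"]
    unfolding M_def W_def
    by (simp add: matrix_add_ldistrib mm_sub_l mm_scale_l matrix_mul_assoc UA)
  have UXp0: "transpose U ** Xp 0 = (1 / (2 * beta)) *\<^sub>R (Lam ** M 0)"
    unfolding Xp_def M_def by (simp add: mm_scale_l matrix_mul_assoc UA)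
  have main: "invertible (M t) \<and> invertible (Gp t) \<and> opnorm2 (matrix_inv (Gp t)) \<le> B
     \<and> transpose U ** Y (t + 1) = Lam ** Gp t ** M t
     \<and> Gp t = mat 1 - beta *\<^sub>R (Linv ** (transpose U ** Xp t) ** matrix_inv (M t ** Rt t)) + E t" for t
  proof (induction t)
    case 0
    have sp: "sigma_min (M 0) > 0" using X0_angle cosX[of 0] unfolding U_def by simp
    have invM: "invertible (M 0)" by (rule sigma_pos_inv[OF sp])
    have Eb: "opnorm2 (E 0) \<le> cD" by (rule Ebound[OF invM])
    have Gp0: "Gp 0 = (1/2) *\<^sub>R mat 1 + E 0" unfolding Gp_def by simp
    have lb: "(1/2 - cD) * norm x \<le> norm (Gp 0 *v x)" for x
    proof -
      have "norm (E 0 *v x) \<le> cD * norm x"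
        by (meson Eb opn_mv order_trans mult_right_mono norm_ge_zero)
      moreover have "norm ((1/2::real) *\<^sub>R x) - norm (E 0 *v x) \<le> norm ((1/2::real) *\<^sub>R x + E 0 *v x)"
        using norm_diff_ineq[of "(1/2::real) *\<^sub>R x" "E 0 *v x"] by simp
      ultimately show ?thesis unfolding Gp0 by (simp add: matrix_vector_mult_add_rdistrib mv_scale_r algebra_simps)
    qed
    have invG: "invertible (Gp 0)" and nG: "opnorm2 (matrix_inv (Gp 0)) \<le> B"
      using lower_inv[OF _ lb] cD_lt unfolding B_def by auto
    have Y: "transpose U ** Y (0 + 1) = Lam ** Gp 0 ** M 0"
      using UY1 unfolding Gp0 Edef
      by (simp add: matrix_add_ldistrib mm_add_r mm_scale_l mm_scale_r matrix_mul_assoc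
          mi_rules[OF invLam] mi_rules[OF invM] Linv_def)
    have F: "Gp 0 = mat 1 - beta *\<^sub>R (Linv ** (transpose U ** Xp 0) ** matrix_inv (M 0 ** Rt 0)) + E 0"
      unfolding Gp0 UXp0 Rt_def using beta_pos
      by (simp add: mm_scale_l mm_scale_r matrix_mul_assoc mi_rules[OF invLam] mi_rules[OF invM] Linv_def half_id)
    show ?case using invM invG nG Y F by blast
  next
    case (Suc t)
    then have invM: "invertible (M t)" and invG: "invertible (Gp t)"
      and nG: "opnorm2 (matrix_inv (Gp t)) \<le> B"
      and UYt: "transpose U ** Y (Suc t) = Lam ** Gp t ** M t" by auto
    have QRt: "Y (Suc t) = X (Suc t) ** R (Suc t)" using QR unfolding is_QR_def by auto
    have MR: "M (Suc t) ** R (Suc t) = Lam ** Gp t ** M t"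
      using UYt unfolding QRt M_def by (simp add: matrix_mul_assoc)
    have invP: "invertible (Lam ** Gp t ** M t)" by (intro invertible_mult invLam invG invM)
    have invM': "invertible (M (Suc t))" and invR: "invertible (R (Suc t))"
      using inv_factors[of "M (Suc t)" "R (Suc t)"] invP MR by auto
    have Eb: "opnorm2 (E (Suc t)) \<le> cD" by (rule Ebound[OF invM'])
    define N where "N = Linv ** matrix_inv (Gp t) ** Linv"
    have GpS: "Gp (Suc t) = mat 1 - beta *\<^sub>R N + E (Suc t)"
      unfolding Gp_def N_def Linv_def by simp
    have nN: "beta * opnorm2 N \<le> 1/2"
    proof -
      have "opnorm2 N \<le> opnorm2 Linv * opnorm2 (matrix_inv (Gp t)) * opnorm2 Linv"
        unfolding N_def by (meson opn_mult order_trans mult_right_mono opn_nonneg)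
      also have "\<dots> \<le> (1 / lamk) * B * (1 / lamk)"
        by (intro mult_mono Linv_norm nG opn_nonneg mult_nonneg_nonneg) (use lamk_pos B_pos in auto)
      finally have "opnorm2 N \<le> (1 / lamk) * B * (1 / lamk)" .
      then have "beta * opnorm2 N \<le> beta * ((1 / lamk) * B * (1 / lamk))"
        using beta_pos by (intro mult_left_mono) auto
      moreover have "beta * ((1 / lamk) * B * (1 / lamk)) = beta * (1 / lamk) * B * (1 / lamk)"
        by (simp only: mult.assoc)
      ultimately show ?thesis using key by linarith
    qed
    have lb: "(1/2 - cD) * norm x \<le> norm (Gp (Suc t) *v x)" for x
    proof -
      have e: "norm (E (Suc t) *v x) \<le> cD * norm x"
        by (meson Eb opn_mv order_trans mult_right_mono norm_ge_zero)
      have n: "norm (beta *\<^sub>R (N *v x)) \<le> 1/2 * norm x"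
      proof -
        have "norm (beta *\<^sub>R (N *v x)) = beta * norm (N *v x)" using beta_pos by simp
        also have "\<dots> \<le> beta * (opnorm2 N * norm x)" using beta_pos opn_mv by (simp add: mult_left_mono)
        also have "\<dots> = (beta * opnorm2 N) * norm x" by (simp only: mult.assoc)
        also have "\<dots> \<le> 1/2 * norm x" using nN by (rule mult_right_mono) simp
        finally show ?thesis .
      qed
      have "norm x - norm (beta *\<^sub>R (N *v x)) - norm (E (Suc t) *v x) \<le> norm (x - beta *\<^sub>R (N *v x) + E (Suc t) *v x)"
        by (rule norm_lb3)
      then show ?thesis unfolding GpS using e n
        by (simp add: matrix_vector_mult_add_rdistrib matrix_vector_mult_diff_rdistrib mv_scale_r algebra_simps)
    qed
    have invG': "invertible (Gp (Suc t))" and nG': "opnorm2 (matrix_inv (Gp (Suc t))) \<le> B"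
      using lower_inv[OF _ lb] cD_lt unfolding B_def by auto
    have MRinv: "matrix_inv (M (Suc t) ** R (Suc t)) = matrix_inv (M t) ** matrix_inv (Gp t) ** Linv"
      unfolding MR using mi_mult invLam invG invM invertible_mult Linv_def
      by (metis matrix_mul_assoc)
    have XpS: "transpose U ** Xp (Suc t) = M t" unfolding Xp_def M_def by simp
    have RtS: "Rt (Suc t) = R (Suc t)" unfolding Rt_def by simp
    have F: "Gp (Suc t) = mat 1 - beta *\<^sub>R (Linv ** (transpose U ** Xp (Suc t)) ** matrix_inv (M (Suc t) ** Rt (Suc t))) + E (Suc t)"
    proof -
      have "Linv ** (transpose U ** Xp (Suc t)) ** matrix_inv (M (Suc t) ** Rt (Suc t)) = N"
        unfolding XpS RtS MRinv N_def
        by (simp add: matrix_mul_assoc mi_rules[OF invM])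
      then show ?thesis unfolding GpS by simp
    qed
    have MRinv2: "matrix_inv (M (Suc t) ** R (Suc t)) = matrix_inv (R (Suc t)) ** matrix_inv (M (Suc t))"
      by (rule mi_mult[OF invM' invR])
    have Y: "transpose U ** Y (Suc t + 1) = Lam ** Gp (Suc t) ** M (Suc t)"
    proof -
      have "Lam ** Gp (Suc t) ** M (Suc t) = Lam ** (mat 1 - beta *\<^sub>R (Linv ** M t ** (matrix_inv (R (Suc t)) ** matrix_inv (M (Suc t)))) + Linv ** W (Suc t) ** matrix_inv (M (Suc t))) ** M (Suc t)"
        using F unfolding XpS RtS MRinv2 Edef by simp
      also have "\<dots> = Lam ** M (Suc t) - beta *\<^sub>R (M t ** matrix_inv (R (Suc t))) + W (Suc t)"
        by (simp add: matrix_add_ldistrib mm_sub_l mm_add_r mm_sub_r mm_scale_l mm_scale_r matrix_mul_assoc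
          mi_rules[OF invLam] mi_rules[OF invM'] Linv_def)
      finally show ?thesis using UYs[of t] by simp
    qed
    show ?case using invM' invG' nG' Y F by blast
  qed
  show ?thesis
  proof (intro allI)
    fix t
    from main[of t] have m1: "invertible (M t)" and m2: "invertible (Gp t)"
      and m3: "opnorm2 (matrix_inv (Gp t)) \<le> B"
      and m4: "transpose U ** Y (t + 1) = Lam ** Gp t ** M t"
      and m5: "Gp t = mat 1 - beta *\<^sub>R (Linv ** (transpose U ** Xp t) ** matrix_inv (M t ** Rt t)) + E t"
      by auto
    have invP: "invertible (transpose U ** Y (t + 1))" unfolding m4
      by (intro invertible_mult invLam m1 m2)
    have r1: "rank (transpose U ** Y (t + 1)) = CARD('k)" by (rule rank_inv[OF invP])
    have r2: "rank (Y (t + 1)) = CARD('k)"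
      using rank_bound[of "Y (t + 1)"] rank_mul_le_right[of "transpose U" "Y (t + 1)"] r1 by linarith
    have G: "Gmat beta Lam E t = matrix_inv (Gp t)" unfolding Gmat_def Gp_def ..
    have last: "transpose U ** Y (t + 1) = Lam ** matrix_inv (Gmat beta Lam E t) ** (transpose U ** X t)"
      unfolding G mi_inv(1)[OF m2] m4 M_def ..
    have form: "Gmat beta Lam E t = matrix_inv (mat 1 - beta *\<^sub>R (matrix_inv Lam ** (transpose U ** Xp t)
                 ** matrix_inv (transpose U ** X t ** Rt t)) + E t)"
      unfolding G using m5 unfolding M_def Linv_def by simp
    have m3': "opnorm2 (Gmat beta Lam E t) \<le> B" using m3 G by simp
    show "let U = Uk u idx; Lam = Lamk lam idx; E = anpm_E Lam U Xi X;
         G = Gmat beta Lam E;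
         lamk = lam (CARD('k) - 1);
         Delta = (lamk - 2 * sqrt beta) / lamk;
         Xprev = (if t = 0 then (1 / (2 * beta)) *\<^sub>R (A ** X 0) else X (t - 1));
         Rt = (if t = 0 then mat 1 else R t)
     in invertible (transpose U ** X t)
      \<and> invertible (Gpre beta Lam E t)
      \<and> rank (transpose U ** Y (t + 1)) = CARD('k)
      \<and> rank (Y (t + 1)) = CARD('k)
      \<and> opnorm2 (G t) \<le> 1 / (1/2 - c * Delta)
      \<and> G t = matrix_inv (mat 1 - beta *\<^sub>R (matrix_inv Lam ** (transpose U ** Xprev)
                 ** matrix_inv (transpose U ** X t ** Rt)) + E t)
      \<and> transpose U ** Y (t + 1) = Lam ** matrix_inv (G t) ** (transpose U ** X t)"
      unfolding Let_def U_def[symmetric] Lam_def[symmetric] E_def[symmetric] lamk_def[symmetric]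
        Delta_def[symmetric] Xp_def[symmetric, of t] Rt_def[symmetric, of t] cD_def[symmetric] B_def[symmetric]
      using m1 m2 r1 r2 m3' form last unfolding M_def Gp_def by blast
  qed
qed

end
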